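(* In the search model described in the context, if $pv>c(0)$, then it is optimal for the agent to engage in search, i.e., no strategy with $L_t=\emptyset$ for all $t$ is optimal (some strategy searching a set of positive measure yields strictly higher payoff than never searching).
   Context: A single agent searches for an innovation among research projects $J=[0,1)$. In each period $t=1,2,\ldots$ the agent may examine an arbitrary Lebesgue-measurable set $S\subseteq J$ at cost $C(S)=\int_S c(j)\,dj$, where $c:[0,1)\to\mathbb{R}$ is continuous, strictly increasing, and satisfies $\lim_{j\to 1}c(j)=\infty$. With probability $p\in(0,1)$ the innovation is feasible, in which case there is a single successful project $\hat j\in J$, distributed uniformly on $J$; examining $\hat j$ yields a success of value $v>0$, examining any other project yields nothing. With probability $1-p$ no project is successful. Payoffs and costs are discounted by $\delta\in(0,1)$ per period. A search strategy is a sequence $\sigma=(L_1,L_2,\ldots)$ of (possibly empty) measurable subsets of $[0,1)$, where $L_t$ is the set examined in period $t$ if no success occurred in periods $1,\ldots,t-1$; search ends once a success occurs. Let $S_t=\bigcup_{t'<t}L_{t'}$. The agent's payoff from $\sigma$ is $\mathbb{E}\big[\sum_{t\ge1}\delta^{t-1}\big(v\cdot\mathbf{1}\{\text{success in period } t\}-C(L_t)\cdot\mathbf{1}\{\text{no success before period } t\}\big)\big]$, where success in period $t$ means $\hat j$ exists, $\hat j\in L_t$ and $\hat j\notin S_t$. Never searching yields payoff zero. *)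

theory Defs
  imports "HOL-Analysis.Analysis"
begin

text \<open>Periods are indexed from 0: L t is the set examined in period t+1,
  discounted by delta^t. Projects live in [0,1); the (random) successful project is
  a value of type real option: None = innovation infeasible, Some j = project j succeeds.\<close>

definition cost :: "(real \<Rightarrow> real) \<Rightarrow> real set \<Rightarrow> real" where
  "cost c S = (LINT j:S|lebesgue. c j)"

definition searched_before :: "(nat \<Rightarrow> real set) \<Rightarrow> nat \<Rightarrow> real set" where
  "searched_before L t = (\<Union>t'<t. L t')"

definition admissible :: "(nat \<Rightarrow> real set) \<Rightarrow> bool" where
  "admissible L \<longleftrightarrow> (\<forall>t. L t \<in> sets lebesgue \<and> L t \<subseteq> {0..<1})"

definition success_at :: "(nat \<Rightarrow> real set) \<Rightarrow> real option \<Rightarrow> nat \<Rightarrow> bool" where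
  "success_at L x t = (case x of None \<Rightarrow> False
       | Some j \<Rightarrow> j \<in> L t \<and> j \<notin> searched_before L t)"

definition no_success_before :: "(nat \<Rightarrow> real set) \<Rightarrow> real option \<Rightarrow> nat \<Rightarrow> bool" where
  "no_success_before L x t = (case x of None \<Rightarrow> True
       | Some j \<Rightarrow> j \<notin> searched_before L t)"

definition period_term :: "(real \<Rightarrow> real) \<Rightarrow> real \<Rightarrow> real \<Rightarrow> (nat \<Rightarrow> real set)
    \<Rightarrow> real option \<Rightarrow> nat \<Rightarrow> real" where
  "period_term c v \<delta> L x t = \<delta> ^ t *
     ((if success_at L x t then v else 0) - (if no_success_before L x t then cost c (L t) else 0))"

definition realized_payoff :: "(real \<Rightarrow> real) \<Rightarrow> real \<Rightarrow> real \<Rightarrow> (nat \<Rightarrow> real set)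
    \<Rightarrow> real option \<Rightarrow> real" where
  "realized_payoff c v \<delta> L x = (\<Sum>t. period_term c v \<delta> L x t)"

definition well_defined :: "(real \<Rightarrow> real) \<Rightarrow> real \<Rightarrow> real \<Rightarrow> (nat \<Rightarrow> real set) \<Rightarrow> bool" where
  "well_defined c v \<delta> L \<longleftrightarrow>
     (\<forall>t. set_integrable lebesgue (L t) c) \<and>
     (\<forall>x. summable (period_term c v \<delta> L x)) \<and>
     set_integrable lebesgue {0..<1} (\<lambda>j. realized_payoff c v \<delta> L (Some j))"

definition payoff :: "(real \<Rightarrow> real) \<Rightarrow> real \<Rightarrow> real \<Rightarrow> real \<Rightarrow> (nat \<Rightarrow> real set) \<Rightarrow> real" where
  "payoff c p v \<delta> L = (1 - p) * realized_payoff c v \<delta> L None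
     + p * (LINT j:{0..<1}|lebesgue. realized_payoff c v \<delta> L (Some j))"

end

theory Submission
  imports Defs
begin

lemma Ico_leb[simp]: "{a..<b::real} \<in> sets lebesgue"
  by (intro sets_completionI_sets) auto

lemma Ico_fin[simp]: "emeasure lebesgue {a..<b::real} < top"
  by (cases "a \<le> b") auto

lemma Ico_fin'[simp]: "emeasure lebesgue {a..<b::real} \<noteq> top"
  using Ico_fin[of a b] by (simp only: less_top)

lemma cost_empty[simp]: "cost c {} = 0"
  by (simp add: cost_def set_lebesgue_integral_def)

lemma pt_empty: "period_term c v \<delta> (\<lambda>_. {}) x t = 0"
  by (simp add: period_term_def success_at_def split: option.splits)

theorem lemma1:
  fixes c :: "real \<Rightarrow> real" and p v \<delta> :: real
  assumes "continuous_on {0..<1} c"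
    and "strict_mono_on {0..<1} c"
    and "filterlim c at_top (at_left 1)"
    and "0 < p" and "p < 1" and "0 < v" and "0 < \<delta>" and "\<delta> < 1"
    and "p * v > c 0"
  shows "\<exists>L. admissible L \<and> well_defined c v \<delta> L
           \<and> (\<exists>t. emeasure lebesgue (L t) > 0)
           \<and> payoff c p v \<delta> L > payoff c p v \<delta> (\<lambda>_. {})"
proof -
  have "(c \<longlongrightarrow> c 0) (at 0 within {0..<1})"
    using assms(1) by (simp add: continuous_on_def)
  then have "\<forall>\<^sub>F x in at 0 within {0..<1}. c x < p * v"
    using assms(9) by (rule order_tendstoD)
  then obtain d where d: "d > 0" and dH: "\<And>x. x \<in> {0..<1} \<Longrightarrow> x \<noteq> 0 \<Longrightarrow> dist x 0 < d \<Longrightarrow> c x < p * v"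
    unfolding eventually_at by blast
  define e where "e = min (d/2) (1/2)"
  have e0: "0 < e" and e1: "e < 1" and ed: "e < d" using d by (auto simp: e_def)
  have ce: "c e < p * v" using dH[of e] e0 e1 ed by auto
  have cont: "continuous_on {0..e} c" by (rule continuous_on_subset[OF assms(1)]) (use e1 in auto)
  have ii: "set_integrable lebesgue {0..e} c"
    using absolutely_integrable_continuous_real[OF cont] by simp
  have int: "set_integrable lebesgue {0..<e} c"
    by (rule set_integrable_subset[OF ii]) auto
  define C where "C = cost c {0..<e}"
  have Cle: "C \<le> e * c e"
  proof -
    have "C \<le> (LINT j:{0..<e}|lebesgue. c e)"
      unfolding C_def cost_def
    proof (rule set_integral_mono[OF int])
      show "set_integrable lebesgue {0..<e} (\<lambda>_. c e)"
        using e0 by (simp add: set_integrable_def)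
      fix x assume "x \<in> {0..<e}"
      then show "c x \<le> c e" using assms(2) e1
        by (auto simp: strict_mono_on_def intro: less_imp_le)
    qed
    also have "\<dots> = e * c e" using e0 by (subst set_integral_const) auto
    finally show ?thesis .
  qed
  define L where "L = (\<lambda>t::nat. if t = 0 then {0..<e} else ({}::real set))"
  have ptz: "period_term c v \<delta> L x t = 0" if "t \<noteq> 0" for x t
    using that by (simp add: L_def period_term_def success_at_def split: option.splits)
  have sumx: "(period_term c v \<delta> L x) sums (period_term c v \<delta> L x 0)" for x
  proof -
    have "(period_term c v \<delta> L x) sums (\<Sum>t\<in>{0}. period_term c v \<delta> L x t)"
      by (rule sums_finite) (use ptz in auto)
    then show ?thesis by simp
  qed
  have rp: "realized_payoff c v \<delta> L x = period_term c v \<delta> L x 0" for x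
    using sumx[of x] unfolding realized_payoff_def by (simp add: sums_iff)
  have rpN: "realized_payoff c v \<delta> L None = - C"
    unfolding rp by (simp add: period_term_def success_at_def no_success_before_def L_def C_def
        searched_before_def)
  have rpS: "realized_payoff c v \<delta> L (Some j) = v * indicator {0..<e} j - C" for j
    unfolding rp by (simp add: period_term_def success_at_def no_success_before_def L_def C_def
        searched_before_def indicator_def)
  have ind: "(\<lambda>j. indicator {0..<1} j *\<^sub>R (v * indicator {0..<e} j)) = (\<lambda>j. v * indicator {0..<e} j)"
    using e1 by (auto simp: indicator_def fun_eq_iff)
  have a: "set_integrable lebesgue {0..<1} (\<lambda>j. v * indicator {0..<e} j)"
    unfolding set_integrable_def ind using e0 by simp
  have b: "set_integrable lebesgue {0..<1} (\<lambda>j::real. C)"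
    by (auto simp: set_integrable_def intro!: integrable_real_indicator Ico_leb Ico_fin)
  have si1: "set_integrable lebesgue {0..<1} (\<lambda>j. v * indicator {0..<e} j - C)"
    by (rule set_integral_diff[OF a b])
  have si: "set_integrable lebesgue {0..<1} (\<lambda>j. realized_payoff c v \<delta> L (Some j))"
    using si1 by (simp add: rpS)
  have I: "(LINT j:{0..<1}|lebesgue. v * indicator {0..<e} j - C) = v * e - C"
  proof -
    have "(LINT j:{0..<1}|lebesgue. v * indicator {0..<e} j) = v * e"
      unfolding set_lebesgue_integral_def ind using e0 by simp
    moreover have "(LINT (j::real):{0..<1}|lebesgue. C) = C"
      by (subst set_integral_const) auto
    ultimately show ?thesis using set_integral_diff(2)[OF a b] by simp
  qed
  have wd: "well_defined c v \<delta> L"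
    unfolding well_defined_def
  proof (intro conjI allI)
    fix t show "set_integrable lebesgue (L t) c" using int by (simp add: L_def set_integrable_def)
  next
    fix x show "summable (period_term c v \<delta> L x)" using sumx[of x] by (rule sums_summable)
  qed (rule si)
  have adm: "admissible L" using e1 by (auto simp: admissible_def L_def)
  have pos: "emeasure lebesgue (L 0) > 0" using e0 by (simp add: L_def)
  have p0: "payoff c p v \<delta> (\<lambda>_. {}) = 0"
    by (simp add: payoff_def realized_payoff_def pt_empty)
  have "payoff c p v \<delta> L = p * v * e - C"
    by (simp add: payoff_def rpN rpS I algebra_simps)
  moreover have "p * v * e - C > 0"
    using Cle ce e0 by (smt (verit) mult_strict_left_mono mult.commute)
  ultimately show ?thesis using wd adm pos p0 by auto
qed

end
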